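(* Let $p$ be a prime. Let $M$ be a matroid over $\mathbb{Z}/p\mathbb{Z}$ and $N$ a sparse paving matroid over $\mathbb{Z}/p\mathbb{Z}$, both of the same rank $n$, such that either (1) $E(M)$ is not a progression and $|E(M)|=|E(N)|-1$, or (2) $E(M)$ is neither a progression nor a semi-progression and $|E(M)|=|E(N)|$. If $0\notin E(N)$, then $M$ is matched to $N$.
   Context: A matroid over an abelian group $G$ is a matroid $M$ whose finite ground set $E(M)$ is a subset of $G$; all matroids are assumed loopless. A matroid of rank $n$ is paving if every $(n-1)$-element subset of its ground set is independent; it is sparse paving if both it and its dual matroid are paving. A progression of length $k$ with difference $x$ and initial term $a$ is a set $\{a,a+x,\dots,a+(k-1)x\}$; a set $A$ is a semi-progression if $A\setminus\{a\}$ is a progression for some $a\in A$. For matroids $M,N$ over $G$ with $r(M)=r(N)=n>0$ and bases $\mathcal{M}=\{a_1,\dots,a_n\}$ of $M$ and $\mathcal{N}=\{b_1,\dots,b_n\}$ of $N$, $\mathcal{M}$ is matched to $\mathcal{N}$ if there is a permutation $\pi\in S_n$ with $a_i+b_{\pi(i)}\notin E(M)$ for all $i$. $M$ is matched to $N$ if for every basis $\mathcal{M}$ of $M$ there exists a basis $\mathcal{N}$ of $N$ such that $\mathcal{M}$ is matched to $\mathcal{N}$. *)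

theory Defs
  imports Main "HOL-Computational_Algebra.Primes"
begin

text \<open>Z/pZ is represented by the integers 0..p-1 with addition modulo p.
A matroid over Z/pZ is given by its finite ground set E (a subset of {0..<p})
and its set of bases (basis axioms).\<close>

definition is_matroid :: "int set \<Rightarrow> int set set \<Rightarrow> bool" where
  "is_matroid E \<B> \<longleftrightarrow> finite E \<and> \<B> \<noteq> {} \<and> (\<forall>B\<in>\<B>. B \<subseteq> E) \<and>
     (\<forall>B1\<in>\<B>. \<forall>B2\<in>\<B>. \<forall>x\<in>B1 - B2. \<exists>y\<in>B2 - B1. insert y (B1 - {x}) \<in> \<B>)"

definition loopless :: "int set \<Rightarrow> int set set \<Rightarrow> bool" where
  "loopless E \<B> \<longleftrightarrow> (\<forall>e\<in>E. \<exists>B\<in>\<B>. e \<in> B)"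

definition matroid_over_Zp :: "int \<Rightarrow> int set \<Rightarrow> int set set \<Rightarrow> bool" where
  "matroid_over_Zp p E \<B> \<longleftrightarrow> is_matroid E \<B> \<and> loopless E \<B> \<and> E \<subseteq> {0..<p}"

definition has_rank :: "int set set \<Rightarrow> nat \<Rightarrow> bool" where
  "has_rank \<B> n \<longleftrightarrow> (\<forall>B\<in>\<B>. card B = n)"

definition indep :: "int set set \<Rightarrow> int set \<Rightarrow> bool" where
  "indep \<B> X \<longleftrightarrow> (\<exists>B\<in>\<B>. X \<subseteq> B)"

definition dual_bases :: "int set \<Rightarrow> int set set \<Rightarrow> int set set" where
  "dual_bases E \<B> = (\<lambda>B. E - B) ` \<B>"

definition paving :: "int set \<Rightarrow> int set set \<Rightarrow> nat \<Rightarrow> bool" where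
  "paving E \<B> n \<longleftrightarrow> (\<forall>X. X \<subseteq> E \<and> card X = n - 1 \<longrightarrow> indep \<B> X)"

definition sparse_paving :: "int set \<Rightarrow> int set set \<Rightarrow> nat \<Rightarrow> bool" where
  "sparse_paving E \<B> n \<longleftrightarrow> paving E \<B> n \<and> paving E (dual_bases E \<B>) (card E - n)"

definition progression :: "int \<Rightarrow> int set \<Rightarrow> bool" where
  "progression p A \<longleftrightarrow> (\<exists>a x. \<exists>k::nat. A = {(a + int i * x) mod p | i. i < k})"

definition semi_progression :: "int \<Rightarrow> int set \<Rightarrow> bool" where
  "semi_progression p A \<longleftrightarrow> (\<exists>a\<in>A. progression p (A - {a}))"

text \<open>Basis BM of M (ground set EM) matched to basis BN: a bijection f : BM \<rightarrow> BN
with a + f a \<notin> E(M) for all a (this is the permutation in the definition).\<close>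
definition basis_matched :: "int \<Rightarrow> int set \<Rightarrow> int set \<Rightarrow> int set \<Rightarrow> bool" where
  "basis_matched p EM BM BN \<longleftrightarrow>
     (\<exists>f. bij_betw f BM BN \<and> (\<forall>a\<in>BM. (a + f a) mod p \<notin> EM))"

definition matroid_matched :: "int \<Rightarrow> int set \<Rightarrow> int set set \<Rightarrow> int set set \<Rightarrow> bool" where
  "matroid_matched p EM \<B>M \<B>N \<longleftrightarrow>
     (\<forall>BM\<in>\<B>M. \<exists>BN\<in>\<B>N. basis_matched p EM BM BN)"

end

theory Submission
  imports Defs
begin

lemma hall_aux:
  fixes Al :: "'i \<Rightarrow> 'b set"
  shows "\<And>I. card I = N \<Longrightarrow> finite I \<Longrightarrow> (\<forall>i. finite (Al i)) \<Longrightarrow>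
    (\<forall>J\<subseteq>I. card J \<le> card (\<Union>(Al ` J))) \<Longrightarrow>
    \<exists>f. inj_on f I \<and> (\<forall>i\<in>I. f i \<in> Al i)"
proof (induction N arbitrary: Al rule: less_induct)
  case (less N I Al)
  show ?case
  proof (cases "I = {}")
    case True then show ?thesis by auto
  next
    case False
    show ?thesis
    proof (cases "\<exists>J. J \<subseteq> I \<and> J \<noteq> {} \<and> J \<noteq> I \<and> card (\<Union>(Al ` J)) = card J")
      case True
      then obtain J where J: "J \<subseteq> I" "J \<noteq> {}" "J \<noteq> I" "card (\<Union>(Al ` J)) = card J" by blast
      have fJ: "finite J" using J(1) less.prems(2) finite_subset by blast
      have cJ: "card J < N" using J less.prems(1,2) psubset_card_mono[of I J] by blast
      obtain f1 where f1: "inj_on f1 J" "\<forall>i\<in>J. f1 i \<in> Al i"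
        using less.IH[OF cJ refl fJ less.prems(3)] less.prems(4) J(1) by auto
      define U where "U = \<Union>(Al ` J)"
      define Al2 where "Al2 = (\<lambda>i. Al i - U)"
      have fK: "finite (I - J)" using less.prems(2) by simp
      have cK: "card (I - J) < N" using J less.prems(1,2)
      proof -
        have "card (I - J) = card I - card J" using J(1) fJ by (simp add: card_Diff_subset)
        moreover have "card J > 0" using fJ J(2) by auto
        ultimately show ?thesis using less.prems(1) cJ by linarith
      qed
      have fU: "finite U" unfolding U_def using fJ less.prems(3) by auto
      have hall2: "\<forall>K\<subseteq>I - J. card K \<le> card (\<Union>(Al2 ` K))"
      proof (intro allI impI)
        fix K assume K: "K \<subseteq> I - J"
        have eq: "\<Union>(Al2 ` K) = \<Union>(Al ` (K \<union> J)) - U" unfolding Al2_def U_def by auto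
        have fKJ: "finite (K \<union> J)" using K fJ fK finite_subset by blast
        have sub: "U \<subseteq> \<Union>(Al ` (K \<union> J))" unfolding U_def by auto
        have fin2: "finite (\<Union>(Al ` (K \<union> J)))" using fKJ less.prems(3) by auto
        have "K \<union> J \<subseteq> I" using K J(1) by auto
        then have "card (K \<union> J) \<le> card (\<Union>(Al ` (K \<union> J)))"
          using less.prems(4) by blast
        moreover have "card (K \<union> J) = card K + card J"
          using K fKJ by (subst card_Un_disjoint) auto
        moreover have "card (\<Union>(Al2 ` K)) = card (\<Union>(Al ` (K \<union> J))) - card U"
          unfolding eq using card_Diff_subset[OF fU sub] .
        moreover have "card U = card J" using J(4) U_def by simp
        ultimately show "card K \<le> card (\<Union>(Al2 ` K))" by linarith
      qed
      obtain f2 where f2: "inj_on f2 (I - J)" "\<forall>i\<in>I - J. f2 i \<in> Al2 i"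
        using less.IH[OF cK refl fK _ hall2] less.prems(3) unfolding Al2_def by auto
      define f where "f = (\<lambda>i. if i \<in> J then f1 i else f2 i)"
      have "inj_on f I"
        unfolding inj_on_def
      proof (intro ballI impI)
        fix x y assume xy: "x \<in> I" "y \<in> I" "f x = f y"
        show "x = y"
        proof (cases "x \<in> J"; cases "y \<in> J")
          assume "x \<in> J" "y \<in> J" then show ?thesis using xy f1(1) unfolding f_def inj_on_def by auto
        next
          assume a: "x \<in> J" "y \<notin> J"
          then have "f x \<in> U" using f1(2) U_def f_def by auto
          moreover have "f y \<notin> U" using a xy(1,2) f2(2) unfolding f_def Al2_def by auto
          ultimately show ?thesis using xy by auto
        next
          assume a: "x \<notin> J" "y \<in> J"
          then have "f y \<in> U" using f1(2) U_def f_def by auto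
          moreover have "f x \<notin> U" using a xy(1,2) f2(2) unfolding f_def Al2_def by auto
          ultimately show ?thesis using xy by auto
        next
          assume "x \<notin> J" "y \<notin> J" then show ?thesis using xy f2(1) unfolding f_def inj_on_def by auto
        qed
      qed
      moreover have "\<forall>i\<in>I. f i \<in> Al i" using f1(2) f2(2) unfolding f_def Al2_def by auto
      ultimately show ?thesis by blast
    next
      case False2: False
      obtain i0 where i0: "i0 \<in> I" using False by blast
      have "card {i0} \<le> card (\<Union>(Al ` {i0}))" using less.prems(4) i0 by (metis empty_subsetI insert_subset)
      then have "Al i0 \<noteq> {}" by auto
      then obtain x where x: "x \<in> Al i0" by blast
      define Al2 where "Al2 = (\<lambda>i. Al i - {x})"
      have fK: "finite (I - {i0})" using less.prems(2) by simp
      have cK: "card (I - {i0}) < N" using i0 less.prems(1,2)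
      proof -
        have "card I > 0" using i0 less.prems(2) card_gt_0_iff by blast
        then show ?thesis using card_Diff_singleton[OF i0] less.prems(1) by simp
      qed
      have hall2: "\<forall>K\<subseteq>I - {i0}. card K \<le> card (\<Union>(Al2 ` K))"
      proof (intro allI impI)
        fix K assume K: "K \<subseteq> I - {i0}"
        show "card K \<le> card (\<Union>(Al2 ` K))"
        proof (cases "K = {}")
          case True then show ?thesis by simp
        next
          case False
          have fKK: "finite K" using K fK finite_subset by blast
          have ne: "K \<noteq> I" using K i0 by auto
          have KI: "K \<subseteq> I" using K by auto
          have le: "card K \<le> card (\<Union>(Al ` K))" using less.prems(4) KI by blast
          have "card (\<Union>(Al ` K)) \<noteq> card K" using False2 KI False ne by blast
          then have lt: "card K < card (\<Union>(Al ` K))" using le by linarith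
          have eq: "\<Union>(Al2 ` K) = \<Union>(Al ` K) - {x}" unfolding Al2_def by auto
          have "card (\<Union>(Al ` K)) \<le> card (\<Union>(Al ` K) - {x}) + 1"
            using fKK less.prems(3) by (simp add: card_Diff_singleton_if) (intro impI; linarith)
          then show ?thesis using lt unfolding eq by linarith
        qed
      qed
      obtain f2 where f2: "inj_on f2 (I - {i0})" "\<forall>i\<in>I - {i0}. f2 i \<in> Al2 i"
        using less.IH[OF cK refl fK _ hall2] less.prems(3) unfolding Al2_def by auto
      define f where "f = f2(i0 := x)"
      have "inj_on f (insert i0 (I - {i0}))" unfolding inj_on_insert
      proof
        show "inj_on f (I - {i0})" using f2(1) unfolding f_def inj_on_def by auto
        show "f i0 \<notin> f ` (I - {i0} - {i0})" using f2(2) unfolding Al2_def f_def by auto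
      qed
      then have "inj_on f I" using i0 by (simp add: insert_absorb)
      moreover have "\<forall>i\<in>I. f i \<in> Al i" using f2(2) x unfolding f_def Al2_def by auto
      ultimately show ?thesis by blast
    qed
  qed
qed

lemma hall:
  assumes "finite I" "\<forall>i. finite (Al i)" "\<forall>J\<subseteq>I. card J \<le> card (\<Union>(Al ` J))"
  shows "\<exists>f. inj_on f I \<and> (\<forall>i\<in>I. f i \<in> Al i)"
  using hall_aux[OF refl assms] .

lemma restrict_basis_aux:
  assumes m: "is_matroid E Bs" and B0: "B0 \<in> Bs" "B0 \<subseteq> Z" and IZ: "I \<subseteq> Z"
  shows "\<And>B. card (B - Z) = k \<Longrightarrow> B \<in> Bs \<Longrightarrow> I \<subseteq> B \<Longrightarrow> \<exists>B'\<in>Bs. I \<subseteq> B' \<and> B' \<subseteq> Z"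
proof (induction k rule: less_induct)
  case (less k B)
  show ?case
  proof (cases "B \<subseteq> Z")
    case True then show ?thesis using less.prems by blast
  next
    case False
    then obtain x where x: "x \<in> B" "x \<notin> Z" by blast
    have xB0: "x \<notin> B0" using x B0 by blast
    have ex: "\<forall>B1\<in>Bs. \<forall>B2\<in>Bs. \<forall>x\<in>B1 - B2. \<exists>y\<in>B2 - B1. insert y (B1 - {x}) \<in> Bs"
      using m unfolding is_matroid_def by blast
    have "x \<in> B - B0" using x xB0 by blast
    then obtain y where y: "y \<in> B0 - B" "insert y (B - {x}) \<in> Bs"
      using ex less.prems(2) B0(1) by blast
    define B' where "B' = insert y (B - {x})"
    have fin: "finite B" using m less.prems(2) unfolding is_matroid_def by (meson finite_subset)
    have "B' - Z = (B - Z) - {x}" unfolding B'_def using y B0 x by auto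
    then have "card (B' - Z) < k" using less.prems(1) x fin
      by (metis Diff_iff card_Diff1_less finite_Diff)
    moreover have "I \<subseteq> B'" unfolding B'_def using less.prems(3) x IZ by auto
    moreover have "B' \<in> Bs" using y(2) B'_def by simp
    ultimately show ?thesis using less.IH[of "card (B' - Z)" B'] by blast
  qed
qed

lemma restrict_basis:
  assumes "is_matroid E Bs" "B0 \<in> Bs" "B0 \<subseteq> Z" "I \<subseteq> Z" "B \<in> Bs" "I \<subseteq> B"
  shows "\<exists>B'\<in>Bs. I \<subseteq> B' \<and> B' \<subseteq> Z"
  using restrict_basis_aux[OF assms(1-4) refl assms(5,6)] .

lemma sparse_swap:
  assumes m: "is_matroid EN Bs" and r: "has_rank Bs n" and sp: "sparse_paving EN Bs n"
    and X1: "X1 \<subseteq> EN" "card X1 = n" and x: "x \<in> X1" and y: "y \<in> EN" "y \<notin> X1"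
  shows "X1 \<in> Bs \<or> insert y (X1 - {x}) \<in> Bs"
proof -
  have finE: "finite EN" using m unfolding is_matroid_def by blast
  have finX: "finite X1" using X1 finE finite_subset by blast
  define I where "I = X1 - {x}"
  define Z where "Z = insert y X1"
  have cI: "card I = n - 1" unfolding I_def using x finX X1(2) by simp
  have pv: "\<forall>X. X \<subseteq> EN \<and> card X = n - 1 \<longrightarrow> indep Bs X"
    using sp unfolding sparse_paving_def paving_def by blast
  have "I \<subseteq> EN" unfolding I_def using X1 by auto
  then have "indep Bs I" using pv cI by blast
  then obtain B where B: "B \<in> Bs" "I \<subseteq> B" unfolding indep_def by blast
  have ZE: "Z \<subseteq> EN" unfolding Z_def using y X1 by auto
  have cZ: "card Z = n + 1" unfolding Z_def using y finX X1(2) by simp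
  have finZ0: "finite Z" using ZE finE finite_subset by blast
  have cEZ: "card (EN - Z) = card EN - n - 1" using card_Diff_subset[OF finZ0 ZE] cZ by simp
  have pv2: "\<forall>X. X \<subseteq> EN \<and> card X = card EN - n - 1 \<longrightarrow> indep (dual_bases EN Bs) X"
    using sp unfolding sparse_paving_def paving_def by (simp add: diff_diff_left)
  have "indep (dual_bases EN Bs) (EN - Z)" using pv2 cEZ by blast
  then obtain B0 where B0: "B0 \<in> Bs" "EN - Z \<subseteq> EN - B0"
    unfolding indep_def dual_bases_def by blast
  have "B0 \<subseteq> EN" using m B0(1) unfolding is_matroid_def by blast
  then have B0Z: "B0 \<subseteq> Z" using B0(2) by blast
  have IZ: "I \<subseteq> Z" unfolding I_def Z_def by auto
  obtain B' where B': "B' \<in> Bs" "I \<subseteq> B'" "B' \<subseteq> Z"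
    using restrict_basis[OF m B0(1) B0Z IZ B] by blast
  have cB': "card B' = n" using r B'(1) unfolding has_rank_def by blast
  have finZ: "finite Z" using ZE finE finite_subset by blast
  show ?thesis
  proof (cases "x \<in> B'")
    case True
    then have "X1 \<subseteq> B'" using B'(2) unfolding I_def by auto
    then have "X1 = B'" using card_subset_eq[of B' X1] cB' X1(2) B'(3) finZ finite_subset by metis
    then show ?thesis using B'(1) by blast
  next
    case False
    then have "B' \<subseteq> insert y (X1 - {x})" using B'(3) unfolding Z_def by auto
    moreover have "card (insert y (X1 - {x})) = n" using y finX x X1(2) cI I_def
      by (metis card_insert_disjoint finite_Diff Diff_iff Suc_diff_1 card_gt_0_iff empty_iff)
    ultimately have "B' = insert y (X1 - {x})" using card_subset_eq[of "insert y (X1 - {x})" B'] cB' finX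
      by (metis finite_Diff finite_insert)
    then show ?thesis using B'(1) by blast
  qed
qed

definition trn :: "int \<Rightarrow> int \<Rightarrow> int set \<Rightarrow> int set" where
  "trn p e X = (\<lambda>x. (x + e) mod p) ` X"
definition ssum :: "int \<Rightarrow> int set \<Rightarrow> int set \<Rightarrow> int set" where
  "ssum p A B = (\<lambda>(a, b). (a + b) mod p) ` (A \<times> B)"
definition ap :: "int \<Rightarrow> int \<Rightarrow> int \<Rightarrow> nat \<Rightarrow> int set" where
  "ap p x d k = (\<lambda>i. (x + int i * d) mod p) ` {..<k}"

lemma ap_progression: "progression p (ap p x d k)"
  unfolding progression_def ap_def by blast

context
  fixes p :: int
  assumes pp: "prime p"
begin

lemma p_pos: "p > 1" using pp prime_gt_1_int by blast

lemma G_fin: "X \<subseteq> {0..<p} \<Longrightarrow> finite X"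
  using finite_subset by blast

lemma G_card: "card {0..<p} = nat p" by simp

lemma mod_G: "x \<in> {0..<p} \<Longrightarrow> x mod p = x"
  by auto

lemma modp_in: "x mod p \<in> {0..<p}" using p_pos by auto

lemma trn_sub: "trn p e X \<subseteq> {0..<p}" unfolding trn_def using modp_in by auto

lemma trn_inj: "inj_on (\<lambda>x. (x + e) mod p) {0..<p}"
proof (rule inj_onI)
  fix x y assume xy: "x \<in> {0..<p}" "y \<in> {0..<p}" "(x + e) mod p = (y + e) mod p"
  then have "((x + e) - e) mod p = ((y + e) - e) mod p" by (metis mod_diff_left_eq)
  then show "x = y" using xy(1,2) by simp
qed

lemma trn_card: "X \<subseteq> {0..<p} \<Longrightarrow> card (trn p e X) = card X"
  unfolding trn_def by (rule card_image) (rule inj_on_subset[OF trn_inj])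

lemma trn_mem: "X \<subseteq> {0..<p} \<Longrightarrow> x \<in> {0..<p} \<Longrightarrow> ((x + e) mod p \<in> trn p e X) = (x \<in> X)"
  unfolding trn_def using inj_on_image_mem_iff[OF trn_inj[of e]] by blast

lemma trn_trn: "trn p e (trn p f X) = trn p (e + f) X"
  unfolding trn_def image_image by (rule image_cong) (auto simp: mod_add_left_eq mod_add_right_eq ac_simps)

lemma trn_Int: "A \<subseteq> {0..<p} \<Longrightarrow> B \<subseteq> {0..<p} \<Longrightarrow> trn p e (A \<inter> B) = trn p e A \<inter> trn p e B"
  unfolding trn_def using inj_on_image_Int[OF trn_inj] by blast

lemma trn_Un: "trn p e (A \<union> B) = trn p e A \<union> trn p e B"
  unfolding trn_def by auto

lemma trn_0: "X \<subseteq> {0..<p} \<Longrightarrow> trn p 0 X = X"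
proof -
  assume X: "X \<subseteq> {0..<p}"
  have "(\<lambda>x. (x + 0) mod p) ` X = id ` X"
    by (rule image_cong) (use X in auto)
  then show ?thesis unfolding trn_def by simp
qed

lemma ssum_sub: "ssum p A B \<subseteq> {0..<p}" unfolding ssum_def using modp_in by auto

lemma ssum_mem: "a \<in> A \<Longrightarrow> b \<in> B \<Longrightarrow> (a + b) mod p \<in> ssum p A B"
  unfolding ssum_def by auto

lemma ssum_comm: "ssum p A B = ssum p B A"
proof -
  have "\<And>A B. ssum p A B \<subseteq> ssum p B A"
  proof
    fix A B z assume "z \<in> ssum p A B"
    then obtain a b where "a \<in> A" "b \<in> B" "z = (a + b) mod p" unfolding ssum_def by auto
    then show "z \<in> ssum p B A" using ssum_mem[of b B a A] by (simp add: add.commute)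
  qed
  then show ?thesis by blast
qed

lemma ssum_mono: "A \<subseteq> A' \<Longrightarrow> B \<subseteq> B' \<Longrightarrow> ssum p A B \<subseteq> ssum p A' B'"
  unfolding ssum_def by auto

lemma ssum_memE: "z \<in> ssum p A B \<Longrightarrow> (\<And>a b. a \<in> A \<Longrightarrow> b \<in> B \<Longrightarrow> z = (a + b) mod p \<Longrightarrow> P) \<Longrightarrow> P"
  unfolding ssum_def by auto

lemma ssum_single: "ssum p A {b} = trn p b A"
  unfolding ssum_def trn_def by auto

lemma ssum_insert: "ssum p A (insert b B) = trn p b A \<union> ssum p A B"
  unfolding ssum_def trn_def by auto

lemma ssum_assoc: "ssum p (ssum p A B) C = ssum p A (ssum p B C)"
proof
  show "ssum p (ssum p A B) C \<subseteq> ssum p A (ssum p B C)"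
  proof
    fix z assume "z \<in> ssum p (ssum p A B) C"
    then obtain u c where u: "u \<in> ssum p A B" "c \<in> C" "z = (u + c) mod p" by (rule ssum_memE)
    then obtain a b where ab: "a \<in> A" "b \<in> B" "u = (a + b) mod p" by (metis ssum_memE)
    have "z = (a + (b + c) mod p) mod p" using u(3) ab(3) by (simp add: mod_add_left_eq mod_add_right_eq ac_simps)
    then show "z \<in> ssum p A (ssum p B C)" using ab u(2) by (simp add: ssum_mem)
  qed
next
  show "ssum p A (ssum p B C) \<subseteq> ssum p (ssum p A B) C"
  proof
    fix z assume "z \<in> ssum p A (ssum p B C)"
    then obtain a u where u: "a \<in> A" "u \<in> ssum p B C" "z = (a + u) mod p" by (rule ssum_memE)
    then obtain b c where bc: "b \<in> B" "c \<in> C" "u = (b + c) mod p" by (metis ssum_memE)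
    have "z = ((a + b) mod p + c) mod p" using u(3) bc(3) by (simp add: mod_add_left_eq mod_add_right_eq ac_simps)
    then show "z \<in> ssum p (ssum p A B) C" using bc u(1) by (simp add: ssum_mem)
  qed
qed

lemma ssum_G: "A \<subseteq> {0..<p} \<Longrightarrow> b \<in> B \<Longrightarrow> B \<subseteq> {0..<p} \<Longrightarrow> A = {0..<p} \<Longrightarrow> ssum p A B = {0..<p}"
proof -
  assume a: "A \<subseteq> {0..<p}" "b \<in> B" "B \<subseteq> {0..<p}" "A = {0..<p}"
  have "trn p b A \<subseteq> ssum p A B" using a(2) ssum_mono[of A A "{b}" B] ssum_single by auto
  moreover have "card (trn p b A) = nat p" using trn_card a by simp
  moreover have "trn p b A = {0..<p}"
    using card_subset_eq[OF _ trn_sub[of b A]] \<open>card (trn p b A) = nat p\<close> by simp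
  ultimately have "{0..<p} \<subseteq> ssum p A B" by simp
  then show ?thesis using ssum_sub by blast
qed

end

context
  fixes p :: int
  assumes pp: "prime p"
begin

lemma p_pos': "p > 1" using pp prime_gt_1_int by blast

lemma mult_inj:
  assumes d: "d mod p \<noteq> 0" and i: "i < nat p" and j: "j < nat p"
    and eq: "(x + int i * d) mod p = (x + int j * d) mod p"
  shows "i = j"
proof -
  have "p dvd (x + int i * d) - (x + int j * d)" using eq mod_eq_dvd_iff by blast
  then have "p dvd (int i - int j) * d" by (simp add: algebra_simps)
  moreover have "\<not> p dvd d" using d by (simp add: dvd_eq_mod_eq_0)
  ultimately have "p dvd (int i - int j)" using pp prime_dvd_mult_iff by blast
  moreover have "int i < p" "int j < p" using i j p_pos' by linarith+
  then have "\<bar>int i - int j\<bar> < p" by linarith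
  ultimately have "int i - int j = 0"
  proof -
    assume dv: "p dvd (int i - int j)" and lt: "\<bar>int i - int j\<bar> < p"
    show ?thesis
    proof (rule ccontr)
      assume "int i - int j \<noteq> 0"
      then have "\<bar>p\<bar> \<le> \<bar>int i - int j\<bar>" using dvd_imp_le_int dv by blast
      then show False using lt p_pos' by linarith
    qed
  qed
  then show ?thesis by simp
qed

lemma ap_sub: "ap p x d k \<subseteq> {0..<p}"
  unfolding ap_def using p_pos' by auto

lemma ap_card: assumes "d mod p \<noteq> 0" "k \<le> nat p" shows "card (ap p x d k) = k"
proof -
  have "inj_on (\<lambda>i. (x + int i * d) mod p) {..<k}"
    by (rule inj_onI) (use mult_inj[OF assms(1)] assms(2) in auto)
  then show ?thesis unfolding ap_def by (simp add: card_image)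
qed

lemma ap_full: assumes "d mod p \<noteq> 0" shows "ap p x d (nat p) = {0..<p}"
proof -
  have "card (ap p x d (nat p)) = card {0..<p}" using ap_card[OF assms] by simp
  then show ?thesis using card_subset_eq[OF _ ap_sub] by simp
qed

lemma closure:
  assumes X: "X \<subseteq> {0..<p}" and x0: "x0 \<in> X" and d: "d mod p \<noteq> 0"
    and cl: "\<forall>x\<in>X. (x + d) mod p \<in> X"
  shows "X = {0..<p}"
proof -
  have x0m: "x0 mod p = x0" using X x0 by auto
  have all: "(x0 + int i * d) mod p \<in> X" for i
  proof (induction i)
    case 0 then show ?case using x0m x0 by simp
  next
    case (Suc i)
    have "(x0 + int (Suc i) * d) mod p = ((x0 + int i * d) mod p + d) mod p"
      by (simp add: mod_add_left_eq mod_add_right_eq algebra_simps)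
    then show ?case using cl Suc by simp
  qed
  have "ap p x0 d (nat p) \<subseteq> X" unfolding ap_def using all by auto
  then show ?thesis using ap_full[OF d, of x0] X by simp
qed

lemma etrans:
  assumes A: "A \<subseteq> {0..<p}" and B: "B \<subseteq> {0..<p}"
  shows "ssum p (A \<union> trn p e B) {b \<in> B. (b + e) mod p \<in> A} \<subseteq> ssum p A B"
    and "card {b \<in> B. (b + e) mod p \<in> A} = card (A \<inter> trn p e B)"
    and "card (A \<union> trn p e B) + card {b \<in> B. (b + e) mod p \<in> A} = card A + card B"
proof -
  let ?B' = "{b \<in> B. (b + e) mod p \<in> A}"
  show "ssum p (A \<union> trn p e B) ?B' \<subseteq> ssum p A B"
  proof
    fix z assume "z \<in> ssum p (A \<union> trn p e B) ?B'"
    then obtain u v where uv: "u \<in> A \<union> trn p e B" "v \<in> ?B'" "z = (u + v) mod p" by (rule ssum_memE[OF pp])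
    show "z \<in> ssum p A B"
    proof (cases "u \<in> A")
      case True then show ?thesis using uv by (auto intro: ssum_mem[OF pp])
    next
      case False
      then obtain b where b: "b \<in> B" "u = (b + e) mod p" using uv(1) unfolding trn_def by auto
      have "z = (b + (v + e) mod p) mod p" using uv(3) b(2) by (simp add: mod_add_left_eq mod_add_right_eq ac_simps)
      then have "z \<in> ssum p B A" using b(1) uv(2) by (auto intro: ssum_mem[OF pp])
      then show ?thesis using ssum_comm[OF pp] by blast
    qed
  qed
  have t: "trn p e ?B' = A \<inter> trn p e B" unfolding trn_def by blast
  have "?B' \<subseteq> {0..<p}" using B by blast
  then have "card (trn p e ?B') = card ?B'" using trn_card[OF pp] by blast
  then show c2: "card ?B' = card (A \<inter> trn p e B)" using t by simp
  have fA: "finite A" using A finite_subset by blast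
  have fB: "finite (trn p e B)" using trn_sub[OF pp] finite_subset by blast
  have "card (A \<union> trn p e B) + card (A \<inter> trn p e B) = card A + card (trn p e B)"
    using card_Un_Int[OF fA fB] by simp
  then show "card (A \<union> trn p e B) + card ?B' = card A + card B" using c2 trn_card[OF pp B] by simp
qed

lemma cd_aux:
  shows "\<And>A B. card B = k \<Longrightarrow> A \<subseteq> {0..<p} \<Longrightarrow> B \<subseteq> {0..<p} \<Longrightarrow> A \<noteq> {} \<Longrightarrow> B \<noteq> {} \<Longrightarrow>
    ssum p A B \<noteq> {0..<p} \<Longrightarrow> card A + card B \<le> card (ssum p A B) + 1"
proof (induction k rule: less_induct)
  case (less k A B)
  note A = less.prems(2) and B = less.prems(3)
  have fB: "finite B" using B finite_subset by blast
  show ?case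
  proof (cases "card B = 1")
    case True
    then obtain b where b: "B = {b}" using card_1_singletonE by blast
    then show ?thesis using ssum_single[OF pp] trn_card[OF pp A] True by simp
  next
    case False
    have "card B \<noteq> 0" using less.prems(5) fB by simp
    then have "\<not> card B \<le> Suc 0" using False by linarith
    then have "\<not> (\<forall>a\<in>B. \<forall>b\<in>B. a = b)" using card_le_Suc0_iff_eq[OF fB] by blast
    then obtain b1 b2 where b12: "b1 \<in> B" "b2 \<in> B" "b1 \<noteq> b2" by blast
    have AG: "A \<noteq> {0..<p}" using ssum_G[OF pp A b12(1) B] less.prems(6) by blast
    obtain e where e: "A \<inter> trn p e B \<noteq> {}" "\<not> trn p e B \<subseteq> A"
    proof (rule ccontr)
      assume "\<not> thesis"
      then have H: "\<And>e. A \<inter> trn p e B \<noteq> {} \<Longrightarrow> trn p e B \<subseteq> A" using that by blast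
      define d where "d = b2 - b1"
      have dn: "d mod p \<noteq> 0"
      proof
        assume "d mod p = 0"
        then have "b2 mod p = b1 mod p" unfolding d_def by (simp add: mod_eq_dvd_iff dvd_eq_mod_eq_0)
        moreover have "b1 \<in> {0..<p}" "b2 \<in> {0..<p}" using b12 B by blast+
        ultimately show False using b12(3) by simp
      qed
      obtain a0 where a0: "a0 \<in> A" using less.prems(4) by blast
      have "\<forall>a\<in>A. (a + d) mod p \<in> A"
      proof
        fix a assume a: "a \<in> A"
        define e where "e = a - b1"
        have "(b1 + e) mod p = a" unfolding e_def using a A by auto
        then have "a \<in> trn p e B" unfolding trn_def using b12(1) by force
        then have "trn p e B \<subseteq> A" using H a by blast
        moreover have "(b2 + e) mod p \<in> trn p e B" unfolding trn_def using b12(2) by blast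
        moreover have "(b2 + e) = a + d" unfolding e_def d_def by simp
        ultimately show "(a + d) mod p \<in> A" by auto
      qed
      then have "A = {0..<p}" using closure[OF A a0 dn] by blast
      then show False using AG by blast
    qed
    define A' where "A' = A \<union> trn p e B"
    define B' where "B' = {b \<in> B. (b + e) mod p \<in> A}"
    have s1: "ssum p A' B' \<subseteq> ssum p A B" and c2: "card B' = card (A \<inter> trn p e B)"
      and c3: "card A' + card B' = card A + card B"
      using etrans[OF A B, of e] unfolding A'_def B'_def by auto
    have fT: "finite (trn p e B)" using trn_sub[OF pp] finite_subset by blast
    have "A \<inter> trn p e B \<subset> trn p e B" using e(2) by blast
    then have "card (A \<inter> trn p e B) < card (trn p e B)"
      using fT psubset_card_mono by blast
    then have lt: "card B' < k" using c2 trn_card[OF pp B] less.prems(1) by simp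
    have "finite (A \<inter> trn p e B)" using fT by simp
    then have "card (A \<inter> trn p e B) \<noteq> 0" using e(1) by simp
    then have ne: "B' \<noteq> {}" using c2 by auto
    have A'G: "A' \<subseteq> {0..<p}" unfolding A'_def using A trn_sub[OF pp] by auto
    have B'G: "B' \<subseteq> {0..<p}" unfolding B'_def using B by auto
    have A'ne: "A' \<noteq> {}" unfolding A'_def using less.prems(4) by auto
    have fS: "finite (ssum p A B)" using ssum_sub[OF pp] finite_subset by blast
    have nG: "ssum p A' B' \<noteq> {0..<p}" using s1 less.prems(6) ssum_sub[OF pp, of A B] by blast
    have "card A' + card B' \<le> card (ssum p A' B') + 1"
      using less.IH[OF lt refl A'G B'G A'ne ne nG] .
    moreover have "card (ssum p A' B') \<le> card (ssum p A B)" using card_mono[OF fS s1] .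
    ultimately show ?thesis using c3 by linarith
  qed
qed

lemma cauchy_davenport:
  assumes "A \<subseteq> {0..<p}" "B \<subseteq> {0..<p}" "A \<noteq> {}" "B \<noteq> {}" "ssum p A B \<noteq> {0..<p}"
  shows "card A + card B \<le> card (ssum p A B) + 1"
  using cd_aux[OF refl assms] .

end

context
  fixes p :: int
  assumes pp: "prime p"
begin

lemma p_pos3: "p > 1" using pp prime_gt_1_int by blast

lemma neg_nz: "d mod p \<noteq> 0 \<Longrightarrow> (- d) mod p \<noteq> 0"
  by (metis add.inverse_inverse mod_minus_eq neg_equal_0_iff_equal)

lemma G_mod: "x \<in> {0..<p} \<Longrightarrow> x mod p = x" by auto

lemma orbit:
  assumes X: "X \<subseteq> {0..<p}" and ne: "X \<noteq> {}" and nG: "X \<noteq> {0..<p}" and d: "d mod p \<noteq> 0"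
    and c: "card (X \<union> trn p d X) \<le> card X + 1"
  shows "\<exists>s. X = ap p s d (card X)"
proof -
  define k where "k = card X"
  have fX: "finite X" using X finite_subset by blast
  have kp: "k < nat p"
  proof -
    have "X \<subset> {0..<p}" using X nG by blast
    then have "card X < card {0..<p}" using psubset_card_mono by blast
    then show ?thesis unfolding k_def by simp
  qed
  define T where "T = trn p d X"
  have TG: "T \<subseteq> {0..<p}" unfolding T_def using trn_sub[OF pp] .
  have fT: "finite T" using TG finite_subset by blast
  have cT: "card T = k" unfolding T_def k_def using trn_card[OF pp X] .
  have "card (X \<union> T) = card X + card (T - X)"
  proof -
    have "X \<union> T = X \<union> (T - X)" by blast
    then show ?thesis using card_Un_disjoint[OF fX, of "T - X"] fT by simp
  qed
  then have c1: "card (T - X) \<le> 1" using c unfolding T_def by simp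
  define St where "St = X - T"
  have e1: "card St = card X - card (X \<inter> T)" unfolding St_def using fT by (simp add: card_Diff_subset_Int)
  have "T \<inter> X = X \<inter> T" by blast
  then have e2: "card (T - X) = card T - card (X \<inter> T)" using fX card_Diff_subset_Int[of T X] by simp
  have cSt: "card St \<le> 1" using e1 e2 c1 cT unfolding k_def by linarith
  have nd: "(- d) mod p \<noteq> 0" using neg_nz[OF d] .
  have walk: "\<exists>j<k. (y + int j * (- d)) mod p \<in> St" if y: "y \<in> X" for y
  proof -
    define Q where "Q = {j. (y + int (Suc j) * (- d)) mod p \<notin> X}"
    have yG: "y mod p = y" using y X by auto
    have Qne: "Q \<noteq> {}"
    proof
      assume Q0: "Q = {}"
      have "(y + int i * (- d)) mod p \<in> X" for i
      proof (cases i)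
        case 0 then show ?thesis using yG y by simp
      next
        case (Suc i') then show ?thesis using Q0 unfolding Q_def by auto
      qed
      then have "ap p y (- d) (nat p) \<subseteq> X" unfolding ap_def by auto
      then show False using ap_full[OF pp nd] nG X by blast
    qed
    define j0 where "j0 = (LEAST j. j \<in> Q)"
    have "\<exists>j. j \<in> Q" using Qne by blast
    then have j0Q: "j0 \<in> Q" unfolding j0_def by (rule LeastI_ex)
    have inX: "(y + int i * (- d)) mod p \<in> X" if "i \<le> j0" for i
    proof (cases i)
      case 0 then show ?thesis using yG y by simp
    next
      case (Suc i')
      then have "i' < j0" using that by simp
      then have "i' \<notin> Q" unfolding j0_def using not_less_Least by blast
      then show ?thesis using Suc unfolding Q_def by auto
    qed
    define w where "w = (y + int j0 * (- d)) mod p"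
    have wX: "w \<in> X" unfolding w_def using inX by simp
    have wT: "w \<notin> T"
    proof
      assume "w \<in> T"
      then obtain x where x: "x \<in> X" "w = (x + d) mod p" unfolding T_def trn_def by auto
      have "x = x mod p" using x X by auto
      also have "\<dots> = ((x + d) mod p + - d) mod p" by (simp add: mod_diff_left_eq)
      also have "\<dots> = (w + - d) mod p" using x by simp
      also have "\<dots> = (y + int (Suc j0) * (- d)) mod p" unfolding w_def by (simp add: mod_diff_left_eq mod_add_left_eq algebra_simps)
      finally have "(y + int (Suc j0) * (- d)) mod p \<in> X" using x by simp
      then show False using j0Q unfolding Q_def by simp
    qed
    have "j0 < k"
    proof (rule ccontr)
      assume "\<not> j0 < k"
      then have sub: "(\<lambda>i. (y + int i * (- d)) mod p) ` {..k} \<subseteq> X" using inX by auto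
      have "inj_on (\<lambda>i. (y + int i * (- d)) mod p) {..k}"
        by (rule inj_onI) (use mult_inj[OF pp nd] kp in auto)
      then have "card ((\<lambda>i. (y + int i * (- d)) mod p) ` {..k}) = Suc k" by (simp add: card_image)
      moreover have "card ((\<lambda>i. (y + int i * (- d)) mod p) ` {..k}) \<le> k" using card_mono[OF fX sub] k_def by simp
      ultimately show False by simp
    qed
    then show ?thesis using wX wT unfolding St_def w_def by blast
  qed
  obtain y0 where y0: "y0 \<in> X" using ne by blast
  obtain s0 where s0: "s0 \<in> St" using walk[OF y0] by blast
  have fSt: "finite St" unfolding St_def using fX by simp
  have St1: "St = {s0}" using card_le_Suc0_iff_eq[OF fSt] cSt s0 by auto
  have "X \<subseteq> ap p s0 d k"
  proof
    fix y assume y: "y \<in> X"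
    obtain j where j: "j < k" "(y + int j * (- d)) mod p \<in> St" using walk[OF y] by blast
    then have e: "(y + int j * (- d)) mod p = s0" using St1 by simp
    have "((y + int j * (- d)) mod p + int j * d) mod p = y mod p"
      by (subst mod_add_left_eq) simp
    also have "\<dots> = y" using y X by auto
    finally have yy: "y = (s0 + int j * d) mod p" using e by simp
    show "y \<in> ap p s0 d k" unfolding ap_def
      by (rule image_eqI[of _ _ j]) (use yy j(1) in auto)
  qed
  note sub = this
  have ck: "card (ap p s0 d k) = k" using ap_card[OF pp d] kp by simp
  have fin: "finite (ap p s0 d k)" unfolding ap_def by simp
  have "X = ap p s0 d k"
    by (rule card_subset_eq[OF fin sub]) (use ck k_def in linarith)
  then show ?thesis unfolding k_def by blast
qed

lemma ap_sum:
  assumes "k \<ge> 1" "l \<ge> 1"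
  shows "ssum p (ap p x d k) (ap p y d l) = ap p (x + y) d (k + l - 1)"
proof
  show "ssum p (ap p x d k) (ap p y d l) \<subseteq> ap p (x + y) d (k + l - 1)"
  proof
    fix z assume "z \<in> ssum p (ap p x d k) (ap p y d l)"
    then obtain u v where uv: "u \<in> ap p x d k" "v \<in> ap p y d l" "z = (u + v) mod p" by (rule ssum_memE[OF pp])
    obtain i where i: "i < k" "u = (x + int i * d) mod p" using uv(1) unfolding ap_def by auto
    obtain j where j: "j < l" "v = (y + int j * d) mod p" using uv(2) unfolding ap_def by auto
    have "z = ((x + int i * d) mod p + (y + int j * d) mod p) mod p" using uv(3) i(2) j(2) by simp
    also have "\<dots> = (x + int i * d + (y + int j * d)) mod p" by (simp add: mod_add_eq)
    also have "\<dots> = (x + y + int (i + j) * d) mod p" by (simp add: algebra_simps)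
    finally have "z = (x + y + int (i + j) * d) mod p" .
    moreover have "i + j < k + l - 1" using i j by simp
    ultimately show "z \<in> ap p (x + y) d (k + l - 1)" unfolding ap_def by blast
  qed
next
  show "ap p (x + y) d (k + l - 1) \<subseteq> ssum p (ap p x d k) (ap p y d l)"
  proof
    fix z assume "z \<in> ap p (x + y) d (k + l - 1)"
    then obtain m where m: "m < k + l - 1" "z = (x + y + int m * d) mod p" unfolding ap_def by auto
    obtain i j where ij: "i < k" "j < l" "m = i + j"
    proof (cases "m < k")
      case True then show ?thesis using that[of m 0] assms by simp
    next
      case False then show ?thesis using that[of "k - 1" "m - (k - 1)"] assms m(1) by simp
    qed
    have u: "(x + int i * d) mod p \<in> ap p x d k" unfolding ap_def using ij(1) by blast
    have v: "(y + int j * d) mod p \<in> ap p y d l" unfolding ap_def using ij(2) by blast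
    have "((x + int i * d) mod p + (y + int j * d) mod p) mod p = (x + int i * d + (y + int j * d)) mod p"
      by (simp add: mod_add_eq)
    also have "\<dots> = (x + y + int m * d) mod p" using ij(3) by (simp add: algebra_simps)
    finally have "z = ((x + int i * d) mod p + (y + int j * d) mod p) mod p" using m(2) by simp
    then show "z \<in> ssum p (ap p x d k) (ap p y d l)" using ssum_mem[OF pp u v] by simp
  qed
qed

end

definition crit :: "int \<Rightarrow> int set \<Rightarrow> int set \<Rightarrow> bool" where
  "crit p A B \<longleftrightarrow> A \<subseteq> {0..<p} \<and> B \<subseteq> {0..<p} \<and> 2 \<le> card A \<and> 2 \<le> card B \<and>
     card (ssum p A B) + 1 = card A + card B \<and> card (ssum p A B) + 2 \<le> nat p"

definition isap :: "int \<Rightarrow> int set \<Rightarrow> bool" where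
  "isap p X \<longleftrightarrow> (\<exists>x d. X = ap p x d (card X))"

definition mu :: "int \<Rightarrow> int set \<Rightarrow> int set \<Rightarrow> nat" where
  "mu p A B = min (card A) (card B) * (nat p + 1) + max (card A) (card B)"

lemma mu_lt:
  fixes m m' M M' N :: nat
  assumes "m' < m" "M' < N"
  shows "m' * N + M' < m * N + M"
proof -
  have "(m' + 1) * N \<le> m * N" using assms(1) by (intro mult_le_mono1) simp
  then show ?thesis using assms(2) by (simp add: algebra_simps)
qed

lemma two_elems:
  assumes "finite B" "2 \<le> card B"
  shows "\<exists>x y. x \<in> B \<and> y \<in> B \<and> x \<noteq> y"
proof -
  have "\<not> card B \<le> Suc 0" using assms(2) by linarith
  then show ?thesis using card_le_Suc0_iff_eq[OF assms(1)] by blast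
qed

lemma third_elem:
  assumes "finite B" "3 \<le> card B"
  shows "\<exists>z\<in>B. z \<noteq> x \<and> z \<noteq> y"
proof -
  have sb: "B \<subseteq> (B - {x, y}) \<union> {x, y}" by blast
  have "card B \<le> card ((B - {x, y}) \<union> {x, y})" using card_mono[OF _ sb] assms(1) by simp
  moreover have "card ((B - {x, y}) \<union> {x, y}) \<le> card (B - {x, y}) + card {x, y}" by (rule card_Un_le)
  ultimately have "card B \<le> card (B - {x, y}) + card {x, y}" by linarith
  moreover have "card {x, y} \<le> 2" by (simp add: card_insert_le_m1)
  ultimately have "card (B - {x, y}) \<noteq> 0" using assms(2) by linarith
  then have "B - {x, y} \<noteq> {}" by (metis card.empty)
  then obtain z where "z \<in> B - {x, y}" by blast
  then show ?thesis by blast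
qed

context
  fixes p :: int
  assumes pp: "prime p"
begin

lemma p_pos4: "p > 1" using pp prime_gt_1_int by blast

lemma cardG: "X \<subseteq> {0..<p} \<Longrightarrow> card X \<le> nat p"
  using card_mono[of "{0..<p}" X] by simp

lemma ssum_trn_left: "ssum p (trn p e A) B = trn p e (ssum p A B)"
proof
  show "ssum p (trn p e A) B \<subseteq> trn p e (ssum p A B)"
  proof
    fix z assume "z \<in> ssum p (trn p e A) B"
    then obtain u b where u: "u \<in> trn p e A" "b \<in> B" "z = (u + b) mod p" by (rule ssum_memE[OF pp])
    then obtain a where a: "a \<in> A" "u = (a + e) mod p" unfolding trn_def by auto
    have "z = ((a + b) mod p + e) mod p" using u(3) a(2)
      by (simp add: mod_add_left_eq mod_add_right_eq ac_simps)
    moreover have "(a + b) mod p \<in> ssum p A B" using ssum_mem[OF pp a(1) u(2)] .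
    ultimately show "z \<in> trn p e (ssum p A B)" unfolding trn_def by blast
  qed
next
  show "trn p e (ssum p A B) \<subseteq> ssum p (trn p e A) B"
  proof
    fix z assume "z \<in> trn p e (ssum p A B)"
    then obtain u where u: "u \<in> ssum p A B" "z = (u + e) mod p" unfolding trn_def by auto
    then obtain a b where ab: "a \<in> A" "b \<in> B" "u = (a + b) mod p" by (metis ssum_memE[OF pp])
    have "z = ((a + e) mod p + b) mod p" using u(2) ab(3)
      by (simp add: mod_add_left_eq mod_add_right_eq ac_simps)
    moreover have "(a + e) mod p \<in> trn p e A" unfolding trn_def using ab(1) by blast
    ultimately show "z \<in> ssum p (trn p e A) B" using ssum_mem[OF pp _ ab(2)] by blast
  qed
qed

lemma ap2_eq: "ap p 0 d 2 = {0, d mod p}"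
proof -
  have "{..<(2::nat)} = {0, 1}" by auto
  then show ?thesis unfolding ap_def by simp
qed

lemma trn_mod: "trn p (d mod p) A = trn p d A"
  unfolding trn_def by (rule image_cong) (simp_all add: mod_add_right_eq)

lemma ssum_pair: "A \<subseteq> {0..<p} \<Longrightarrow> ssum p A {x, y} = trn p x (A \<union> trn p (y - x) A)"
proof -
  assume A: "A \<subseteq> {0..<p}"
  have "ssum p A {x, y} = trn p x A \<union> trn p y A"
    using ssum_insert[OF pp, of A x "{y}"] ssum_single[OF pp, of A y] by simp
  also have "trn p y A = trn p x (trn p (y - x) A)" using trn_trn[OF pp, of x "y - x" A] by simp
  finally show ?thesis using trn_Un[OF pp] by simp
qed

lemma ap3:
  assumes A: "A \<subseteq> {0..<p}" "A \<noteq> {}" and l: "l \<ge> 2" "card (ap p y d l) = l"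
    and nG: "ssum p A (ap p y d l) \<noteq> {0..<p}"
    and c: "card (ssum p A (ap p y d l)) + 1 = card A + l"
  shows "isap p (ssum p A (ap p y d l))"
proof -
  have dn: "d mod p \<noteq> 0"
  proof
    assume d0: "d mod p = 0"
    have "\<And>i. (y + int i * d) mod p = y mod p"
    proof -
      fix i
      have "(y + int i * d) mod p = (y + (int i * d) mod p) mod p" by (simp add: mod_add_right_eq)
      moreover have "(int i * d) mod p = (int i * (d mod p)) mod p" by (simp add: mod_mult_right_eq)
      ultimately show "(y + int i * d) mod p = y mod p" using d0 by simp
    qed
    then have "ap p y d l \<subseteq> {y mod p}" unfolding ap_def by auto
    then have "card (ap p y d l) \<le> card {y mod p}" using card_mono[of "{y mod p}"] by blast
    then have "card (ap p y d l) \<le> 1" by simp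
    then show False using l by simp
  qed
  have lp: "l \<le> nat p" using cardG[OF ap_sub[OF pp, of y d l]] l(2) by simp
  define B2 where "B2 = ap p 0 d 2"
  define Bl where "Bl = ap p y d (l - 1)"
  have "ap p y d l = ssum p B2 Bl" unfolding B2_def Bl_def using ap_sum[OF pp, of 2 "l - 1" 0 d y] l(1) by simp
  then have eqS: "ssum p A (ap p y d l) = ssum p (ssum p A B2) Bl" using ssum_assoc[OF pp] by simp
  define C where "C = ssum p A B2"
  have CU: "C = A \<union> trn p d A"
  proof -
    have "C = trn p 0 A \<union> trn p (d mod p) A"
      unfolding C_def B2_def ap2_eq using ssum_insert[OF pp, of A 0 "{d mod p}"] ssum_single[OF pp] by simp
    then show ?thesis using trn_0[OF pp A(1)] trn_mod by simp
  qed
  have CG: "C \<subseteq> {0..<p}" using CU A(1) trn_sub[OF pp] by blast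
  have Cne: "C \<noteq> {}" using CU A(2) by blast
  have BlG: "Bl \<subseteq> {0..<p}" unfolding Bl_def using ap_sub[OF pp] .
  have cBl: "card Bl = l - 1" unfolding Bl_def using ap_card[OF pp dn] lp by simp
  have Blne: "Bl \<noteq> {}" using cBl l(1) by auto
  have "card C + card Bl \<le> card (ssum p C Bl) + 1"
    using cauchy_davenport[OF pp CG BlG Cne Blne] nG eqS C_def by simp
  then have cC: "card (A \<union> trn p d A) \<le> card A + 1" using c eqS C_def cBl CU l(1) by simp
  have "card (ssum p A (ap p y d l)) \<le> nat p" using cardG[OF ssum_sub[OF pp]] .
  then have "card A < card {0..<p}" using c l(1) by simp
  then have AG: "A \<noteq> {0..<p}" by blast
  obtain s where s: "A = ap p s d (card A)" using orbit[OF pp A(1) A(2) AG dn cC] by blast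
  have "finite A" using A(1) finite_subset by blast
  then have cA: "card A \<ge> 1" using A(2) by (simp add: Suc_le_eq card_gt_0_iff)
  have "ssum p A (ap p y d l) = ap p (s + y) d (card A + l - 1)"
    using ap_sum[OF pp cA, of l s d y] l(1) s by simp
  moreover have "card A + l - 1 = card (ssum p A (ap p y d l))" using c by simp
  ultimately have "ssum p A (ap p y d l) = ap p (s + y) d (card (ssum p A (ap p y d l)))" by simp
  then show ?thesis unfolding isap_def by blast
qed

end

context
  fixes p :: int
  assumes pp: "prime p"
begin

lemma G_mod5: "x \<in> {0..<p} \<Longrightarrow> x mod p = x" by auto

lemma dist_nz: "x \<in> {0..<p} \<Longrightarrow> y \<in> {0..<p} \<Longrightarrow> x \<noteq> y \<Longrightarrow> (y - x) mod p \<noteq> 0"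
proof
  assume a: "x \<in> {0..<p}" "y \<in> {0..<p}" "x \<noteq> y" "(y - x) mod p = 0"
  have "p dvd (y - x)" using a(4) by (simp add: dvd_eq_mod_eq_0)
  then have "y mod p = x mod p" by (simp add: mod_eq_dvd_iff)
  then show False using a(1-3) by simp
qed

lemma vstep_b2:
  assumes cr: "crit p A B" and b2: "card B = 2"
  shows "isap p (ssum p A B)"
proof -
  have A: "A \<subseteq> {0..<p}" and B: "B \<subseteq> {0..<p}" and cA: "2 \<le> card A"
    and c: "card (ssum p A B) + 1 = card A + card B" and cS: "card (ssum p A B) + 2 \<le> nat p"
    using cr unfolding crit_def by auto
  have "\<exists>x y. B = {x, y} \<and> x \<noteq> y" using b2 by (simp add: card_2_iff)
  then obtain x y where xy: "B = {x, y}" "x \<noteq> y" by blast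
  have xG: "x \<in> {0..<p}" and yG: "y \<in> {0..<p}" using xy B by auto
  have "ap p x (y - x) 2 = {x mod p, (x + (y - x)) mod p}"
  proof -
    have "{..<(2::nat)} = {0, 1}" by auto
    then show ?thesis unfolding ap_def by simp
  qed
  also have "\<dots> = B" using xy xG yG by simp
  finally have Bap: "B = ap p x (y - x) 2" by simp
  have Ane: "A \<noteq> {}" using cA by auto
  have nG: "ssum p A B \<noteq> {0..<p}" using cS by auto
  show ?thesis using ap3[OF pp A Ane _ _, of 2 x "y - x"] Bap b2 nG c by simp
qed

lemma etrans_case:
  assumes cr: "crit p A B" and bA: "card B \<le> card A"
    and IH: "\<And>A' B'. crit p A' B' \<Longrightarrow> mu p A' B' < mu p A B \<Longrightarrow> isap p (ssum p A' B')"
    and e: "2 \<le> card (A \<inter> trn p e B)" "card (A \<inter> trn p e B) < card B"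
  shows "isap p (ssum p A B)"
proof -
  have A: "A \<subseteq> {0..<p}" and B: "B \<subseteq> {0..<p}" and cA: "2 \<le> card A" and cB: "2 \<le> card B"
    and c: "card (ssum p A B) + 1 = card A + card B" and cS: "card (ssum p A B) + 2 \<le> nat p"
    using cr unfolding crit_def by auto
  define A' where "A' = A \<union> trn p e B"
  define B' where "B' = {b \<in> B. (b + e) mod p \<in> A}"
  have s1: "ssum p A' B' \<subseteq> ssum p A B" and c2: "card B' = card (A \<inter> trn p e B)"
    and c3: "card A' + card B' = card A + card B"
    using etrans[OF pp A B, of e] unfolding A'_def B'_def by auto
  have A'G: "A' \<subseteq> {0..<p}" unfolding A'_def using A trn_sub[OF pp] by auto
  have B'G: "B' \<subseteq> {0..<p}" unfolding B'_def using B by auto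
  have fA': "finite A'" using A'G finite_subset by blast
  have cA': "card A \<le> card A'" using card_mono[OF fA'] unfolding A'_def by simp
  have cB': "2 \<le> card B'" using c2 e by simp
  have A'ne: "A' \<noteq> {}" using cA cA' by auto
  have B'ne: "B' \<noteq> {}" using cB' by auto
  have fS: "finite (ssum p A B)" using ssum_sub[OF pp] finite_subset by blast
  have nG: "ssum p A B \<noteq> {0..<p}" using cS by auto
  have nG': "ssum p A' B' \<noteq> {0..<p}" using s1 nG ssum_sub[OF pp, of A B] by blast
  have "card A' + card B' \<le> card (ssum p A' B') + 1"
    using cauchy_davenport[OF pp A'G B'G A'ne B'ne nG'] .
  moreover have le: "card (ssum p A' B') \<le> card (ssum p A B)" using card_mono[OF fS s1] .
  ultimately have ceq: "card (ssum p A' B') = card (ssum p A B)" using c3 c by linarith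
  have Seq: "ssum p A' B' = ssum p A B" using card_subset_eq[OF fS s1 ceq] .
  have crit': "crit p A' B'" unfolding crit_def using A'G B'G cA cA' cB' ceq c c3 cS by simp
  have "max (card A') (card B') \<le> nat p" using cardG[OF pp A'G] cardG[OF pp B'G] by simp
  then have "max (card A') (card B') < nat p + 1" by simp
  moreover have "min (card A') (card B') < min (card A) (card B)" using c2 e bA by simp
  ultimately have "mu p A' B' < mu p A B" unfolding mu_def by (rule mu_lt[rotated])
  then show ?thesis using IH[OF crit'] Seq by simp
qed

end

context
  fixes p :: int
  assumes pp: "prime p"
begin

lemma full_trn:
  assumes B: "B \<subseteq> {0..<p}" and c: "card B \<le> card (A \<inter> trn p e B)"
  shows "trn p e B \<subseteq> A"
proof -
  have fT: "finite (trn p e B)" using trn_sub[OF pp] finite_subset by blast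
  have "card (A \<inter> trn p e B) \<le> card (trn p e B)" using card_mono[OF fT] by simp
  moreover have "card (trn p e B) = card B" using trn_card[OF pp B] .
  ultimately have "A \<inter> trn p e B = trn p e B" using card_subset_eq[OF fT, of "A \<inter> trn p e B"] c by simp
  then show ?thesis by blast
qed

lemma union_card:
  assumes X: "X \<subseteq> {0..<p}"
  shows "card (X \<union> trn p d X) + card (X \<inter> trn p d X) = 2 * card X"
proof -
  have fX: "finite X" using X finite_subset by blast
  have fT: "finite (trn p d X)" using trn_sub[OF pp] finite_subset by blast
  show ?thesis using card_Un_Int[OF fX fT] trn_card[OF pp X] by simp
qed

lemma hcase:
  assumes cr: "crit p A B" and bA: "card B \<le> card A"
    and IH: "\<And>A' B'. crit p A' B' \<Longrightarrow> mu p A' B' < mu p A B \<Longrightarrow> isap p (ssum p A' B')"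
    and b3: "3 \<le> card B"
    and H: "\<And>e. 2 \<le> card (A \<inter> trn p e B) \<Longrightarrow> card B \<le> card (A \<inter> trn p e B)"
  shows "isap p (ssum p A B)"
proof -
  have A: "A \<subseteq> {0..<p}" and B: "B \<subseteq> {0..<p}" and cA: "2 \<le> card A" and cB: "2 \<le> card B"
    and c: "card (ssum p A B) + 1 = card A + card B" and cS: "card (ssum p A B) + 2 \<le> nat p"
    using cr unfolding crit_def by auto
  have fA: "finite A" using A finite_subset by blast
  have fB: "finite B" using B finite_subset by blast
  have fS: "finite (ssum p A B)" using ssum_sub[OF pp] finite_subset by blast
  obtain x y where xy: "x \<in> B" "y \<in> B" "x \<noteq> y" using two_elems[OF fB cB] by blast
  have xG: "x \<in> {0..<p}" and yG: "y \<in> {0..<p}" using xy B by auto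
  define d where "d = y - x"
  have dn: "d mod p \<noteq> 0" unfolding d_def using dist_nz[OF pp xG yG xy(3)] .
  have AG: "A \<noteq> {0..<p}"
  proof
    assume "A = {0..<p}"
    then have "card A = nat p" by simp
    then show False using c cS cB by linarith
  qed
  have cU: "card (A \<union> trn p d A) \<le> card A + card B - 1"
  proof -
    have "ssum p A {x, y} = trn p x (A \<union> trn p d A)" unfolding d_def using ssum_pair[OF pp A] .
    moreover have "A \<union> trn p d A \<subseteq> {0..<p}" using A trn_sub[OF pp, of d A] by blast
    then have "card (trn p x (A \<union> trn p d A)) = card (A \<union> trn p d A)"
      using trn_card[OF pp] by blast
    moreover have "ssum p A {x, y} \<subseteq> ssum p A B" using ssum_mono[OF pp, of A A "{x,y}" B] xy by simp
    ultimately have "card (A \<union> trn p d A) \<le> card (ssum p A B)" using card_mono[OF fS] by metis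
    then show ?thesis using c by linarith
  qed
  define P where "P = {a \<in> A. (a + d) mod p \<in> A}"
  have cP: "card P = card (A \<inter> trn p d A)" unfolding P_def using etrans(2)[OF pp A A, of d] .
  have cP2: "card A + 1 \<le> card P + card B" using cU union_card[OF A, of d] cP cB by linarith
  define F where "F = {e \<in> {0..<p}. trn p e B \<subseteq> A}"
  have FG: "F \<subseteq> {0..<p}" unfolding F_def by blast
  have fF: "finite F" using FG finite_subset by blast
  define phi where "phi = (\<lambda>a. (a - x) mod p)"
  have phiF: "phi a \<in> F" if a: "a \<in> P" for a
  proof -
    have aA: "a \<in> A" and adA: "(a + d) mod p \<in> A" using a unfolding P_def by auto
    have aG: "a \<in> {0..<p}" using aA A by auto
    define e where "e = (a - x) mod p"
    have eG: "e \<in> {0..<p}" unfolding e_def using p_pos4[OF pp] by simp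
    have ex: "(x + e) mod p = a" unfolding e_def using aG by (simp add: mod_add_right_eq)
    have ey: "(y + e) mod p = (a + d) mod p" unfolding e_def d_def by (simp add: mod_add_right_eq) (simp add: algebra_simps)
    have m1: "a \<in> A \<inter> trn p e B" using aA ex xy(1) unfolding trn_def by force
    have m2: "(a + d) mod p \<in> A \<inter> trn p e B" using adA ey xy(2) unfolding trn_def by force
    have neq: "a \<noteq> (a + d) mod p"
    proof
      assume "a = (a + d) mod p"
      then have "(a + d) mod p = a mod p" using aG by simp
      then have "p dvd (a + d - a)" using mod_eq_dvd_iff by blast
      then show False using dn by (simp add: dvd_eq_mod_eq_0)
    qed
    have fI: "finite (A \<inter> trn p e B)" using fA by simp
    have "card {a, (a + d) mod p} \<le> card (A \<inter> trn p e B)"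
      using card_mono[OF fI] m1 m2 by simp
    then have "2 \<le> card (A \<inter> trn p e B)" using neq by simp
    then have "card B \<le> card (A \<inter> trn p e B)" using H by blast
    then have "trn p e B \<subseteq> A" using full_trn[OF B] by blast
    then show ?thesis unfolding phi_def F_def using eG e_def by simp
  qed
  have "inj_on phi P"
  proof (rule inj_onI)
    fix a1 a2 assume a: "a1 \<in> P" "a2 \<in> P" "phi a1 = phi a2"
    have g: "a1 \<in> {0..<p}" "a2 \<in> {0..<p}" using a(1,2) A unfolding P_def by auto
    have "((a1 - x) mod p + x) mod p = ((a2 - x) mod p + x) mod p" using a(3) unfolding phi_def by simp
    then have "a1 mod p = a2 mod p" by (simp add: mod_add_left_eq)
    then show "a1 = a2" using g by simp
  qed
  moreover have "phi ` P \<subseteq> F" using phiF by blast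
  ultimately have "card P \<le> card F" using card_inj_on_le fF by blast
  then have cF1: "card A + 1 \<le> card F + card B" using cP2 by linarith
  have sFB: "ssum p F B \<subseteq> A"
  proof
    fix z assume "z \<in> ssum p F B"
    then obtain f b where fb: "f \<in> F" "b \<in> B" "z = (f + b) mod p" by (rule ssum_memE[OF pp])
    have "(b + f) mod p \<in> trn p f B" unfolding trn_def using fb(2) by blast
    moreover have "trn p f B \<subseteq> A" using fb(1) unfolding F_def by blast
    moreover have "z = (b + f) mod p" using fb(3) by (simp add: add.commute)
    ultimately show "z \<in> A" by blast
  qed
  have Fne: "F \<noteq> {}" using cF1 bA by auto
  have Bne: "B \<noteq> {}" using cB by auto
  have nGF: "ssum p F B \<noteq> {0..<p}"
  proof
    assume "ssum p F B = {0..<p}"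
    then have "{0..<p} \<subseteq> A" using sFB by simp
    then have "A = {0..<p}" using A by (rule subset_antisym[rotated])
    then show False using AG by simp
  qed
  have cd: "card F + card B \<le> card (ssum p F B) + 1" using cauchy_davenport[OF pp FG B Fne Bne nGF] .
  have "card (ssum p F B) \<le> card A" using card_mono[OF fA sFB] .
  then have cFe: "card F + card B = card A + 1" and cSF: "card (ssum p F B) = card A" using cd cF1 by linarith+
  have SFA: "ssum p F B = A" using card_subset_eq[OF fA sFB cSF] .
  show ?thesis
  proof (cases "2 \<le> card F")
    case True
    have critF: "crit p F B" unfolding crit_def using FG B True cB cSF cFe c cS b3 by simp
    have "mu p F B < mu p A B"
    proof (cases "card F < card B")
      case True
      have "max (card F) (card B) \<le> nat p" using cardG[OF pp FG] cardG[OF pp B] by simp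
      then have "max (card F) (card B) < nat p + 1" by simp
      moreover have "min (card F) (card B) < min (card A) (card B)" using True bA by simp
      ultimately show ?thesis unfolding mu_def by (rule mu_lt[rotated])
    next
      case False
      then have "min (card F) (card B) = min (card A) (card B)" using bA by simp
      moreover have "max (card F) (card B) < max (card A) (card B)" using False cFe cB bA by simp
      ultimately show ?thesis unfolding mu_def by simp
    qed
    then have "isap p A" using IH[OF critF] SFA by simp
    then obtain s d' where s: "A = ap p s d' (card A)" unfolding isap_def by blast
    have Bne': "B \<noteq> {}" using cB by auto
    have "isap p (ssum p B (ap p s d' (card A)))"
    proof (rule ap3[OF pp B Bne'])
      show "2 \<le> card A" using cA .
      show "card (ap p s d' (card A)) = card A" using s by simp
      show "ssum p B (ap p s d' (card A)) \<noteq> {0..<p}" using s ssum_comm[OF pp, of A B] cS by auto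
      show "card (ssum p B (ap p s d' (card A))) + 1 = card B + card A"
        using s ssum_comm[OF pp, of A B] c by simp
    qed
    then show ?thesis using s ssum_comm[OF pp, of A B] by simp
  next
    case False
    moreover have "card F \<noteq> 0" using Fne fF by simp
    ultimately have cF: "card F = 1" by linarith
    then obtain f where f: "F = {f}" using card_1_singletonE by blast
    have fG: "f \<in> {0..<p}" using f FG by auto
    have tfA: "trn p f B \<subseteq> A" using f unfolding F_def by auto
    have ab: "card A = card B" using cFe cF by simp
    have AtB: "A = trn p f B" using card_subset_eq[OF fA tfA] trn_card[OF pp B] ab by simp
    obtain d' where d': "d' mod p \<noteq> 0" "2 \<le> card (B \<inter> trn p d' B)"
    proof (cases "2 \<le> card (B \<inter> trn p d B)")
      case True then show ?thesis by (rule that[OF dn])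
    next
      case False
      have BB: "ssum p B B = ssum p B {x, y}"
      proof -
        have sub: "ssum p B {x, y} \<subseteq> ssum p B B" using ssum_mono[OF pp, of B B "{x,y}" B] xy by simp
        have fBB: "finite (ssum p B B)" using ssum_sub[OF pp] finite_subset by blast
        have "ssum p A B = trn p f (ssum p B B)" using AtB ssum_trn_left[OF pp] by simp
        then have c1: "card (ssum p B B) = card (ssum p A B)" using trn_card[OF pp ssum_sub[OF pp]] by simp
        have "ssum p B {x, y} = trn p x (B \<union> trn p d B)" unfolding d_def using ssum_pair[OF pp B] .
        moreover have "B \<union> trn p d B \<subseteq> {0..<p}" using B trn_sub[OF pp, of d B] by blast
        then have "card (trn p x (B \<union> trn p d B)) = card (B \<union> trn p d B)"
          using trn_card[OF pp] by blast
        ultimately have "card (ssum p B {x, y}) = card (B \<union> trn p d B)" by simp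
        moreover have "card (B \<union> trn p d B) + card (B \<inter> trn p d B) = 2 * card B" using union_card[OF B] .
        ultimately have "card (ssum p B B) \<le> card (ssum p B {x, y})" using False c1 c ab by linarith
        then have "card (ssum p B {x, y}) = card (ssum p B B)" using card_mono[OF fBB sub] by linarith
        then have "ssum p B {x, y} = ssum p B B" by (rule card_subset_eq[OF fBB sub])
        then show ?thesis by simp
      qed
      obtain z where z: "z \<in> B" "z \<noteq> x" "z \<noteq> y" using third_elem[OF fB b3, of x y] by blast
      have zG: "z \<in> {0..<p}" using z B by auto
      have "(z + z) mod p \<in> ssum p B {x, y}" using BB ssum_mem[OF pp z(1) z(1)] by simp
      then obtain w t where wt: "w \<in> B" "t \<in> {x, y}" "(z + z) mod p = (w + t) mod p"
        by (rule ssum_memE[OF pp])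
      have tB: "t \<in> B" using wt(2) xy by auto
      have tG: "t \<in> {0..<p}" using tB B by auto
      have wG: "w \<in> {0..<p}" using wt(1) B by auto
      have zt: "z \<noteq> t" using wt(2) z by auto
      define d'' where "d'' = z - t"
      have tz: "t \<noteq> z" using zt by simp
      have nz: "d'' mod p \<noteq> 0" unfolding d''_def using dist_nz[OF pp tG zG tz] .
      have z1: "z \<in> trn p d'' B"
      proof -
        have "(t + d'') mod p = z" unfolding d''_def using zG by simp
        then show ?thesis unfolding trn_def using tB by force
      qed
      have w1: "w \<in> trn p d'' B"
      proof -
        have "(z + d'') mod p = (z + z - t) mod p" unfolding d''_def by simp
        also have "\<dots> = ((z + z) mod p - t) mod p" by (simp add: mod_diff_left_eq)
        also have "\<dots> = ((w + t) mod p - t) mod p" using wt(3) by simp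
        also have "\<dots> = w" using wG by (simp add: mod_diff_left_eq)
        finally show ?thesis unfolding trn_def using z(1) by force
      qed
      have zw: "z \<noteq> w"
      proof
        assume "z = w"
        then have "(z + z) mod p = (z + t) mod p" using wt(3) by simp
        then have "p dvd (z + z - (z + t))" using mod_eq_dvd_iff by blast
        then have "(z - t) mod p = 0" by (simp add: dvd_eq_mod_eq_0)
        then show False using nz d''_def by simp
      qed
      have fI: "finite (B \<inter> trn p d'' B)" using fB by simp
      have "card {z, w} \<le> card (B \<inter> trn p d'' B)" using card_mono[OF fI] z(1) wt(1) z1 w1 by simp
      then have "2 \<le> card (B \<inter> trn p d'' B)" using zw by simp
      then show ?thesis by (rule that[OF nz])
    qed
    define e where "e = f + d'"
    have "trn p e B = trn p f (trn p d' B)" unfolding e_def using trn_trn[OF pp] by simp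
    then have "A \<inter> trn p e B = trn p f (B \<inter> trn p d' B)"
      using AtB trn_Int[OF pp B trn_sub[OF pp]] by simp
    then have "card (A \<inter> trn p e B) = card (B \<inter> trn p d' B)"
      using trn_card[OF pp] B by (metis Int_lower1 order_trans)
    note eqc = this
    then have "2 \<le> card (A \<inter> trn p e B)" using d'(2) by simp
    then have "card B \<le> card (A \<inter> trn p e B)" by (rule H)
    then have "card B \<le> card (B \<inter> trn p d' B)" using eqc by simp
    then have "trn p d' B \<subseteq> B" using full_trn[OF B, of B d'] by simp
    then have "\<forall>u\<in>B. (u + d') mod p \<in> B" unfolding trn_def by blast
    then have "B = {0..<p}" using closure[OF pp B xy(1) d'(1)] by blast
    then have "card B = nat p" by simp
    then show ?thesis using c cS cA by linarith
  qed
qed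

end

context
  fixes p :: int
  assumes pp: "prime p"
begin

lemma vstep:
  assumes cr: "crit p A B" and bA: "card B \<le> card A"
    and IH: "\<And>A' B'. crit p A' B' \<Longrightarrow> mu p A' B' < mu p A B \<Longrightarrow> isap p (ssum p A' B')"
  shows "isap p (ssum p A B)"
proof (cases "card B = 2")
  case True then show ?thesis using vstep_b2[OF pp cr] by simp
next
  case False
  then have b3: "3 \<le> card B" using cr unfolding crit_def by simp
  show ?thesis
  proof (cases "\<exists>e. 2 \<le> card (A \<inter> trn p e B) \<and> card (A \<inter> trn p e B) < card B")
    case True
    then obtain e where e: "2 \<le> card (A \<inter> trn p e B)" "card (A \<inter> trn p e B) < card B" by blast
    show ?thesis using etrans_case[OF pp cr bA IH e] .
  next
    case False
    have H: "card B \<le> card (A \<inter> trn p e B)" if "2 \<le> card (A \<inter> trn p e B)" for e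
      using False that by (meson not_less)
    show ?thesis using hcase[OF pp cr bA IH b3 H] .
  qed
qed

lemma vosper_aux: "\<forall>A B. mu p A B = m \<longrightarrow> crit p A B \<longrightarrow> isap p (ssum p A B)"
proof (induction m rule: less_induct)
  case (less m)
  show ?case
  proof (intro allI impI)
    fix A B assume m: "mu p A B = m" and cr: "crit p A B"
    have IH: "\<And>A' B'. crit p A' B' \<Longrightarrow> mu p A' B' < mu p A B \<Longrightarrow> isap p (ssum p A' B')"
      using less.IH m by blast
    show "isap p (ssum p A B)"
    proof (cases "card B \<le> card A")
      case True then show ?thesis by (rule vstep[OF cr _ IH])
    next
      case False
      have sc: "ssum p B A = ssum p A B" using ssum_comm[OF pp] by blast
      have cr': "crit p B A" using cr sc unfolding crit_def by auto
      have mu': "mu p B A = mu p A B" unfolding mu_def by (simp add: min.commute max.commute)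
      have bA': "card A \<le> card B" using False by simp
      have IH': "\<And>A' B'. crit p A' B' \<Longrightarrow> mu p A' B' < mu p B A \<Longrightarrow> isap p (ssum p A' B')"
        using IH mu' by simp
      have "isap p (ssum p B A)" by (rule vstep[OF cr' bA' IH'])
      then show ?thesis using sc by simp
    qed
  qed
qed

lemma vosper: "crit p A B \<Longrightarrow> isap p (ssum p A B)"
  using vosper_aux by blast

lemma near_full:
  assumes X: "X \<subseteq> {0..<p}" and c: "nat p \<le> card X + 1"
  shows "progression p X"
proof -
  have p1: "p > 1" using pp prime_gt_1_int by blast
  have one: "1 mod p \<noteq> 0" using p1 by simp
  show ?thesis
  proof (cases "X = {0..<p}")
    case True
    then show ?thesis using ap_full[OF pp one, of 0] ap_progression by metis
  next
    case False
    then obtain c0 where c0: "c0 \<in> {0..<p}" "c0 \<notin> X" using X by blast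
    define Y where "Y = ap p (c0 + 1) 1 (nat p - 1)"
    have YG: "Y \<subseteq> {0..<p} - {c0}"
    proof
      fix z assume "z \<in> Y"
      then obtain i where i: "i < nat p - 1" "z = (c0 + 1 + int i * 1) mod p" unfolding Y_def ap_def by auto
      have "z \<noteq> c0"
      proof
        assume "z = c0"
        then have "(c0 + (1 + int i)) mod p = c0 mod p" using i(2) c0(1) by (simp add: ac_simps)
        then have "p dvd (c0 + (1 + int i) - c0)" using mod_eq_dvd_iff by blast
        then have "p dvd (1 + int i)" by simp
        moreover have "1 + int i < p" "0 < 1 + int i" using i(1) by linarith+
        ultimately show False using zdvd_imp_le by fastforce
      qed
      moreover have "z \<in> {0..<p}" using i(2) p1 by simp
      ultimately show "z \<in> {0..<p} - {c0}" by blast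
    qed
    have cY: "card Y = nat p - 1" unfolding Y_def using ap_card[OF pp one] by simp
    have XY: "X \<subseteq> {0..<p} - {c0}" using X c0 by blast
    have fin: "finite ({0..<p} - {c0})" by simp
    have cG: "card ({0..<p} - {c0}) = nat p - 1" using c0(1) by simp
    have "Y = {0..<p} - {c0}" using card_subset_eq[OF fin YG] cY cG by simp
    moreover have "X = {0..<p} - {c0}" using card_subset_eq[OF fin XY] cG c card_mono[OF fin XY] by linarith
    ultimately show ?thesis using ap_progression unfolding Y_def by metis
  qed
qed

end

definition Tset :: "int \<Rightarrow> int set \<Rightarrow> int set \<Rightarrow> int set" where
  "Tset p EM U = {x \<in> {0..<p}. \<forall>a\<in>U. (a + x) mod p \<in> EM}"

context
  fixes p :: int
  assumes pp: "prime p"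
begin

lemma Tset_props:
  assumes EMG: "EM \<subseteq> {0..<p}" and nf: "card EM + 2 \<le> nat p" and U: "U \<subseteq> EM" "U \<noteq> {}"
  shows "0 \<in> Tset p EM U" and "ssum p (Tset p EM U) U \<subseteq> EM"
    and "card (Tset p EM U) + card U \<le> card EM + 1"
proof -
  have p1: "p > 1" using pp prime_gt_1_int by blast
  have "\<forall>a\<in>U. (a + 0) mod p \<in> EM"
  proof
    fix a assume a: "a \<in> U"
    then have "a \<in> {0..<p}" using U(1) EMG by blast
    then have "(a + 0) mod p = a" by simp
    then show "(a + 0) mod p \<in> EM" using a U(1) by auto
  qed
  then show z: "0 \<in> Tset p EM U" unfolding Tset_def using p1 by auto
  show s: "ssum p (Tset p EM U) U \<subseteq> EM"
  proof
    fix z assume "z \<in> ssum p (Tset p EM U) U"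
    then obtain x a where xa: "x \<in> Tset p EM U" "a \<in> U" "z = (x + a) mod p" by (rule ssum_memE[OF pp])
    then have "(a + x) mod p \<in> EM" unfolding Tset_def by blast
    then show "z \<in> EM" using xa(3) by (simp add: add.commute)
  qed
  have TG: "Tset p EM U \<subseteq> {0..<p}" unfolding Tset_def by blast
  have UG: "U \<subseteq> {0..<p}" using U EMG by blast
  have Tne: "Tset p EM U \<noteq> {}" using z by blast
  have fEM: "finite EM" using EMG finite_subset by blast
  have nG: "ssum p (Tset p EM U) U \<noteq> {0..<p}"
  proof
    assume "ssum p (Tset p EM U) U = {0..<p}"
    then have "{0..<p} \<subseteq> EM" using s by simp
    then have "card {0..<p} \<le> card EM" using card_mono[OF fEM] by blast
    then show False using nf by simp
  qed
  have "card (Tset p EM U) + card U \<le> card (ssum p (Tset p EM U) U) + 1"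
    using cauchy_davenport[OF pp TG UG Tne U(2) nG] .
  moreover have "card (ssum p (Tset p EM U) U) \<le> card EM" using card_mono[OF fEM s] .
  ultimately show "card (Tset p EM U) + card U \<le> card EM + 1" by linarith
qed

lemma Al_union:
  assumes ENG: "EN \<subseteq> {0..<p}"
  shows "(\<Union>a\<in>U. {b \<in> EN. (a + b) mod p \<notin> EM}) = EN - Tset p EM U"
  unfolding Tset_def using ENG by auto

lemma EN_minus_T:
  assumes ENG: "EN \<subseteq> {0..<p}" and z: "0 \<in> T" and z': "0 \<notin> EN" and fT: "finite T"
  shows "card EN \<le> card (EN - T) + card T - 1"
proof -
  have fEN: "finite EN" using ENG finite_subset by blast
  have "EN \<inter> T \<subseteq> T - {0}" using z' by blast
  then have "card (EN \<inter> T) \<le> card (T - {0})" using card_mono fT by blast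
  moreover have "card (T - {0}) = card T - 1" using z fT by simp
  moreover have "card (EN - T) = card EN - card (EN \<inter> T)" using fEN by (simp add: card_Diff_subset_Int)
  moreover have "card (EN \<inter> T) \<le> card EN" using card_mono[OF fEN] by simp
  moreover have "card T \<ge> 1" using z fT by (metis card_0_eq empty_iff less_one not_less)
  ultimately show ?thesis by linarith
qed

end

theorem corollary2p5:
  fixes p :: int and n :: nat
    and EM EN :: "int set" and BsM BsN :: "int set set"
  assumes "prime p"
    and "matroid_over_Zp p EM BsM" and "matroid_over_Zp p EN BsN"
    and "sparse_paving EN BsN n"
    and "has_rank BsM n" and "has_rank BsN n" and "n > 0"
    and "(\<not> progression p EM \<and> card EM = card EN - 1) \<or>
         (\<not> progression p EM \<and> \<not> semi_progression p EM \<and> card EM = card EN)"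
    and "0 \<notin> EN"
  shows "matroid_matched p EM BsM BsN"
proof -
  note pp = assms(1)
  have mM: "is_matroid EM BsM" and EMG: "EM \<subseteq> {0..<p}"
    using assms(2) unfolding matroid_over_Zp_def by auto
  have mN: "is_matroid EN BsN" and lN: "loopless EN BsN" and ENG: "EN \<subseteq> {0..<p}"
    using assms(3) unfolding matroid_over_Zp_def by auto
  have fEM: "finite EM" using EMG finite_subset by blast
  have fEN: "finite EN" using ENG finite_subset by blast
  have np: "\<not> progression p EM" using assms(8) by blast
  have nf: "card EM + 2 \<le> nat p"
  proof (rule ccontr)
    assume "\<not> card EM + 2 \<le> nat p"
    then have "nat p \<le> card EM + 1" by simp
    then show False using near_full[OF pp EMG] np by blast
  qed
  have z0: "0 \<notin> EN" using assms(9) .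
  have BsNne: "BsN \<noteq> {}" using mN unfolding is_matroid_def by blast
  obtain B0 where B0: "B0 \<in> BsN" using BsNne by blast
  have B0E: "B0 \<subseteq> EN" using mN B0 unfolding is_matroid_def by blast
  have cB0: "card B0 = n" using assms(6) B0 unfolding has_rank_def by blast
  have nEN: "n \<le> card EN" using card_mono[OF fEN B0E] cB0 by simp
  have cases12: "card EN = card EM + 1 \<or> card EN = card EM"
    using assms(8) assms(7) nEN by linarith
  show ?thesis unfolding matroid_matched_def
  proof
    fix S assume S: "S \<in> BsM"
    have SEM: "S \<subseteq> EM" using mM S unfolding is_matroid_def by blast
    have SG: "S \<subseteq> {0..<p}" using SEM EMG by blast
    have fS: "finite S" using SEM fEM finite_subset by blast
    have cS: "card S = n" using assms(5) S unfolding has_rank_def by blast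
    define Al where "Al = (\<lambda>a. {b \<in> EN. (a + b) mod p \<notin> EM})"
    have finAl: "\<forall>a. finite (Al a)" unfolding Al_def using fEN by simp
    have UAl: "\<Union>(Al ` U) = EN - Tset p EM U" for U
      unfolding Al_def using Al_union[OF pp ENG] by simp
    have cnt: "card EN + card U \<le> card (\<Union>(Al ` U)) + card EM"
      if U: "U \<subseteq> S" "U \<noteq> {}" for U
    proof -
      have UEM: "U \<subseteq> EM" using U SEM by blast
      have z: "0 \<in> Tset p EM U" using Tset_props(1)[OF pp EMG nf UEM U(2)] .
      have c1: "card (Tset p EM U) + card U \<le> card EM + 1" using Tset_props(3)[OF pp EMG nf UEM U(2)] .
      have "Tset p EM U \<subseteq> {0..<p}" unfolding Tset_def by blast
      then have fT: "finite (Tset p EM U)" using finite_subset by blast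
      have "card EN \<le> card (EN - Tset p EM U) + card (Tset p EM U) - 1"
        using EN_minus_T[OF pp ENG z z0 fT] .
      moreover have "card (Tset p EM U) \<ge> 1" using z fT card_gt_0_iff[of "Tset p EM U"] by auto
      ultimately show ?thesis using c1 unfolding UAl[of U] by linarith
    qed
    have hallc: "\<forall>J\<subseteq>S. card J \<le> card (\<Union>(Al ` J))"
    proof (intro allI impI)
      fix J assume J: "J \<subseteq> S"
      show "card J \<le> card (\<Union>(Al ` J))"
      proof (cases "J = {}")
        case True then show ?thesis by simp
      next
        case False
        show ?thesis using cnt[OF J False] cases12 by linarith
      qed
    qed
    obtain f where f: "inj_on f S" "\<forall>a\<in>S. f a \<in> Al a" using hall[OF fS finAl hallc] by blast
    define X1 where "X1 = f ` S"
    have X1E: "X1 \<subseteq> EN" unfolding X1_def using f(2) unfolding Al_def by blast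
    have cX1: "card X1 = n" unfolding X1_def using card_image[OF f(1)] cS by simp
    have fgood: "\<forall>a\<in>S. (a + f a) mod p \<notin> EM" using f(2) unfolding Al_def by blast
    show "\<exists>BN\<in>BsN. basis_matched p EM S BN"
    proof (cases "X1 \<in> BsN")
      case True
      have "bij_betw f S X1" unfolding X1_def using f(1) by (simp add: bij_betw_def)
      then have "basis_matched p EM S X1" unfolding basis_matched_def using fgood by blast
      then show ?thesis using True by blast
    next
      case X1nb: False
      show ?thesis
      proof (cases "\<exists>a\<in>S. \<exists>y\<in>Al a. y \<notin> X1")
        case True
        then obtain a y where ay: "a \<in> S" "y \<in> Al a" "y \<notin> X1" by blast
        have yEN: "y \<in> EN" using ay(2) unfolding Al_def by blast
        have faX: "f a \<in> X1" unfolding X1_def using ay(1) by blast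
        define X2 where "X2 = insert y (X1 - {f a})"
        have X2b: "X2 \<in> BsN"
          using sparse_swap[OF mN assms(6) assms(4) X1E cX1 faX yEN ay(3)] X1nb unfolding X2_def by blast
        define g where "g = f(a := y)"
        have imS: "g ` (S - {a}) = X1 - {f a}"
        proof -
          have "g ` (S - {a}) = f ` (S - {a})" unfolding g_def by (rule image_cong) auto
          also have "\<dots> = f ` S - f ` {a}" using inj_on_image_set_diff[OF f(1)] ay(1) by blast
          finally show ?thesis unfolding X1_def by simp
        qed
        have Sa: "S = insert a (S - {a})" using ay(1) by blast
        have gS: "g ` S = X2"
        proof -
          have "g ` S = insert (g a) (g ` (S - {a}))" using Sa by (metis image_insert)
          then show ?thesis using imS unfolding X2_def g_def by simp
        qed
        have injg: "inj_on g S"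
        proof -
          have i1: "inj_on f (S - {a})" using inj_on_subset[OF f(1)] by blast
          have "inj_on g (S - {a}) = inj_on f (S - {a})" unfolding g_def by (rule inj_on_cong) auto
          then have "inj_on g (S - {a})" using i1 by simp
          moreover have "g a \<notin> g ` (S - {a})" using imS ay(3) unfolding g_def by auto
          ultimately show ?thesis
          proof -
            assume i2: "inj_on g (S - {a})" and i3: "g a \<notin> g ` (S - {a})"
            show ?thesis
            proof (rule inj_onI)
              fix u v assume uv: "u \<in> S" "v \<in> S" "g u = g v"
              show "u = v"
              proof (cases "u = a"; cases "v = a")
                assume "u = a" "v = a" then show ?thesis by simp
              next
                assume "u = a" "v \<noteq> a" then show ?thesis using i3 uv by (metis Diff_iff empty_iff image_eqI insert_iff)
              next
                assume "u \<noteq> a" "v = a" then show ?thesis using i3 uv by (metis Diff_iff empty_iff image_eqI insert_iff)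
              next
                assume "u \<noteq> a" "v \<noteq> a" then show ?thesis using i2 uv unfolding inj_on_def by blast
              qed
            qed
          qed
        qed
        have "bij_betw g S X2" using injg gS by (simp add: bij_betw_def)
        moreover have "\<forall>a'\<in>S. (a' + g a') mod p \<notin> EM"
          using fgood ay(2) unfolding g_def Al_def by auto
        ultimately have "basis_matched p EM S X2" unfolding basis_matched_def by blast
        then show ?thesis using X2b by blast
      next
        case False
        then have sub: "\<Union>(Al ` S) \<subseteq> X1" by blast
        have fX1: "finite X1" using X1E fEN finite_subset by blast
        have cUS: "card (\<Union>(Al ` S)) \<le> n" using card_mono[OF fX1 sub] cX1 by simp
        have Sne: "S \<noteq> {}" using cS assms(7) by auto
        define T where "T = Tset p EM S"
        have z: "0 \<in> T" unfolding T_def using Tset_props(1)[OF pp EMG nf SEM Sne] .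
        have c1: "card T + n \<le> card EM + 1" unfolding T_def using Tset_props(3)[OF pp EMG nf SEM Sne] cS by simp
        have sT: "ssum p T S \<subseteq> EM" unfolding T_def using Tset_props(2)[OF pp EMG nf SEM Sne] .
        have TG: "T \<subseteq> {0..<p}" unfolding T_def Tset_def by blast
        have fT: "finite T" using TG finite_subset by blast
        have e1: "card EN \<le> card (EN - T) + card T - 1" using EN_minus_T[OF pp ENG z z0 fT] .
        have e2: "EN - T = \<Union>(Al ` S)" using UAl[of S] unfolding T_def by simp
        have ct1: "card T \<ge> 1" using z fT card_gt_0_iff[of T] by auto
        have ceq: "card EN = card EM" and ctn: "card T + n = card EM + 1"
          using cases12 e1 cUS c1 ct1 unfolding e2 by linarith+
        show ?thesis
        proof (cases "n = 1")
          case True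
          then obtain a where a: "S = {a}" using cS card_1_singletonE by blast
          have "f a \<in> EN" using X1E a unfolding X1_def by blast
          then obtain B where B: "B \<in> BsN" "f a \<in> B" using lN unfolding loopless_def by blast
          have cB: "card B = 1" using assms(6) B(1) True unfolding has_rank_def by simp
          then have "B = {f a}" using B(2) by (metis card_1_singletonE singletonD)
          then have "X1 \<in> BsN" using B(1) a unfolding X1_def by simp
          then show ?thesis using X1nb by blast
        next
          case n1: False
          show ?thesis
          proof (cases "card T = 1")
            case True
            then have "T = {0}" using z by (metis card_1_singletonE singletonD)
            then have "EN - T = EN" using z0 by blast
            then have "EN \<subseteq> X1" using e2 sub by simp
            then have "EN = X1" using X1E by blast
            have "B0 = EN" using card_subset_eq[OF fEN B0E] cB0 ceq ctn True by simp
            then have "X1 \<in> BsN" using B0 \<open>EN = X1\<close> by simp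
            then show ?thesis using X1nb by blast
          next
            case t1: False
            have fSS: "finite (ssum p T S)" using ssum_sub[OF pp] finite_subset by blast
            have nG: "ssum p T S \<noteq> {0..<p}"
            proof
              assume "ssum p T S = {0..<p}"
              then have "card {0..<p} \<le> card EM" using card_mono[OF fEM sT] by simp
              then show False using nf by simp
            qed
            have Tne: "T \<noteq> {}" using z by blast
            have cd: "card T + card S \<le> card (ssum p T S) + 1"
              using cauchy_davenport[OF pp TG SG Tne Sne nG] .
            have le: "card (ssum p T S) \<le> card EM" using card_mono[OF fEM sT] .
            have cSS: "card (ssum p T S) = card EM" using cd le ctn cS by linarith
            have SSE: "ssum p T S = EM" using card_subset_eq[OF fEM sT cSS] .
            have "crit p T S" unfolding crit_def using TG SG t1 ct1 n1 assms(7) cS cSS ctn nf by simp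
            then have "isap p (ssum p T S)" using vosper[OF pp] by blast
            then obtain x d where "EM = ap p x d (card EM)" using SSE unfolding isap_def by metis
            then have "progression p EM" using ap_progression by metis
            then show ?thesis using np by blast
          qed
        qed
      qed
    qed
  qed
qed

end
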